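(* Let $X_1,X_2,B_1,B_2$ be topological spaces with continuous maps $f\colon X_1\to X_2$, $r_1\colon X_1\to B_1$, $r_2\colon X_2\to B_2$, $f_0\colon B_1\to B_2$ such that $r_2\circ f=f_0\circ r_1$, where $B_1,B_2$ are locally compact Hausdorff and $f_0$ is proper. Let $\tilde f\colon\beta_{B_1}X_1\to\beta_{B_2}X_2$ be the unique continuous map with $\tilde f\circ i_1=i_2\circ f$ and $\beta_{B_2}r_2\circ\tilde f=f_0\circ\beta_{B_1}r_1$. If $f$ is a homeomorphism, then so is $\tilde f$.
   Context: For a locally compact Hausdorff space $B$ and a space $X$ with continuous $r\colon X\to B$, let $H_X\subseteq\mathrm{C_b}(X)$ be the closed linear span of products $u\cdot(v\circ r)$, $u\in\mathrm{C_b}(X)$, $v\in\mathrm C_0(B)$. The relative Stone--Čech compactification $\beta_BX$ is the spectrum of the commutative C*-algebra $H_X$; $i\colon X\to\beta_BX$ sends $x$ to evaluation at $x$; $\beta_Br\colon\beta_BX\to B$ is the unique continuous map with $\beta_Br\circ i=r$. The map $\tilde f$ exists and is unique; $i_j$ denotes the canonical map for $(X_j,r_j)$. *)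

theory Defs
  imports "HOL-Analysis.Analysis"
begin

definition Cb :: "'a topology \<Rightarrow> ('a \<Rightarrow> complex) set" where
  "Cb X = {u. continuous_map X euclidean u \<and> (\<exists>M. \<forall>x\<in>topspace X. norm (u x) \<le> M)
              \<and> (\<forall>x. x \<notin> topspace X \<longrightarrow> u x = 0)}"

definition C0 :: "'b topology \<Rightarrow> ('b \<Rightarrow> complex) set" where
  "C0 B = {v. continuous_map B euclidean v
              \<and> (\<forall>e>0. compactin B {b \<in> topspace B. norm (v b) \<ge> e})
              \<and> (\<forall>b. b \<notin> topspace B \<longrightarrow> v b = 0)}"

text \<open>H_X: closure (in sup norm) of the linear span of the products u * (v o r).\<close>
definition HX :: "'a topology \<Rightarrow> ('a \<Rightarrow> 'b) \<Rightarrow> 'b topology \<Rightarrow> ('a \<Rightarrow> complex) set" where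
  "HX X r B = {h \<in> Cb X. \<forall>e>0. \<exists>(n::nat) u v. (\<forall>i<n. u i \<in> Cb X \<and> v i \<in> C0 B) \<and>
       (\<forall>x\<in>topspace X. norm (h x - (\<Sum>i<n. u i x * v i (r x))) < e)}"

definition chars :: "'a topology \<Rightarrow> ('a \<Rightarrow> 'b) \<Rightarrow> 'b topology \<Rightarrow> (('a \<Rightarrow> complex) \<Rightarrow> complex) set" where
  "chars X r B = {\<phi> \<in> PiE (HX X r B) (\<lambda>_. UNIV).
      (\<forall>h\<in>HX X r B. \<forall>g\<in>HX X r B. \<phi> (\<lambda>x. h x + g x) = \<phi> h + \<phi> g
                                   \<and> \<phi> (\<lambda>x. h x * g x) = \<phi> h * \<phi> g)
    \<and> (\<forall>c. \<forall>h\<in>HX X r B. \<phi> (\<lambda>x. c * h x) = c * \<phi> h)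
    \<and> (\<exists>h\<in>HX X r B. \<phi> h \<noteq> 0)}"

text \<open>The relative Stone-Cech compactification: the spectrum of H_X with the weak-* topology.\<close>
definition betaB :: "'a topology \<Rightarrow> ('a \<Rightarrow> 'b) \<Rightarrow> 'b topology \<Rightarrow> (('a \<Rightarrow> complex) \<Rightarrow> complex) topology" where
  "betaB X r B = subtopology (product_topology (\<lambda>_. euclidean) (HX X r B)) (chars X r B)"

definition iota :: "'a topology \<Rightarrow> ('a \<Rightarrow> 'b) \<Rightarrow> 'b topology \<Rightarrow> 'a \<Rightarrow> (('a \<Rightarrow> complex) \<Rightarrow> complex)" where
  "iota X r B x = restrict (\<lambda>h. h x) (HX X r B)"

end

theory Submission
  imports Defs
begin


lemma cm_mult:
  fixes f g :: "'a \<Rightarrow> 'b::real_normed_algebra"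
  shows "continuous_map X euclidean f \<Longrightarrow> continuous_map X euclidean g \<Longrightarrow> continuous_map X euclidean (\<lambda>x. f x * g x)"
  by (simp add: continuous_map_atin tendsto_mult)

lemma cm_cnj: "continuous_map X euclidean f \<Longrightarrow> continuous_map X euclidean (\<lambda>x. cnj (f x))"
  by (simp add: continuous_map_atin tendsto_cnj)

lemma cm_inverse:
  fixes f :: "'a \<Rightarrow> complex"
  shows "continuous_map X euclidean f \<Longrightarrow> (\<forall>x\<in>topspace X. f x \<noteq> 0) \<Longrightarrow> continuous_map X euclidean (\<lambda>x. inverse (f x))"
  by (simp add: continuous_map_atin tendsto_inverse)

lemma Cb_zero: "u \<in> Cb X \<Longrightarrow> x \<notin> topspace X \<Longrightarrow> u x = 0"
  by (simp add: Cb_def)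

lemma Cb_cont: "u \<in> Cb X \<Longrightarrow> continuous_map X euclidean u"
  by (simp add: Cb_def)

lemma Cb_bound: assumes "u \<in> Cb X" obtains M where "M > 0" "\<And>x. norm (u x) \<le> M"
proof -
  obtain M where M: "\<forall>x\<in>topspace X. norm (u x) \<le> M" using assms by (auto simp: Cb_def)
  show ?thesis
  proof (rule that[of "max M 1"])
    fix x show "norm (u x) \<le> max M 1"
      using M Cb_zero[OF assms, of x] by (cases "x \<in> topspace X") auto
  qed simp
qed

lemma CbI: "continuous_map X euclidean u \<Longrightarrow> (\<And>x. x \<in> topspace X \<Longrightarrow> norm (u x) \<le> M)
   \<Longrightarrow> (\<And>x. x \<notin> topspace X \<Longrightarrow> u x = 0) \<Longrightarrow> u \<in> Cb X"
  by (auto simp: Cb_def)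

lemma Cb_mult: assumes "u \<in> Cb X" "w \<in> Cb X" shows "(\<lambda>x. u x * w x) \<in> Cb X"
proof -
  obtain M1 where M1: "\<And>x. norm (u x) \<le> M1" "M1 > 0" using Cb_bound[OF assms(1)] by metis
  obtain M2 where M2: "\<And>x. norm (w x) \<le> M2" "M2 > 0" using Cb_bound[OF assms(2)] by metis
  show ?thesis
  proof (rule CbI[where M="M1*M2"])
    show "continuous_map X euclidean (\<lambda>x. u x * w x)" using assms by (simp add: Cb_cont cm_mult)
    fix x show "norm (u x * w x) \<le> M1 * M2" unfolding norm_mult
      using M1 M2 by (simp add: mult_mono')
  qed (simp_all add: Cb_zero[OF assms(1)] Cb_zero[OF assms(2)])
qed

lemma Cb_add: assumes "u \<in> Cb X" "w \<in> Cb X" shows "(\<lambda>x. u x + w x) \<in> Cb X"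
proof -
  obtain M1 where M1: "\<And>x. norm (u x) \<le> M1" "M1 > 0" using Cb_bound[OF assms(1)] by metis
  obtain M2 where M2: "\<And>x. norm (w x) \<le> M2" "M2 > 0" using Cb_bound[OF assms(2)] by metis
  show ?thesis
  proof (rule CbI[where M="M1+M2"])
    show "continuous_map X euclidean (\<lambda>x. u x + w x)" using assms by (simp add: Cb_cont continuous_map_add)
    fix x show "norm (u x + w x) \<le> M1 + M2"
      using M1 M2 norm_triangle_ineq[of "u x" "w x"] by (meson add_mono order_trans)
  qed (simp_all add: Cb_zero[OF assms(1)] Cb_zero[OF assms(2)])
qed

lemma Cb_cnj: assumes "u \<in> Cb X" shows "(\<lambda>x. cnj (u x)) \<in> Cb X"
proof -
  obtain M1 where M1: "\<And>x. norm (u x) \<le> M1" "M1 > 0" using Cb_bound[OF assms(1)] by metis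
  show ?thesis
    by (rule CbI[where M="M1"]) (simp_all add: M1 Cb_zero[OF assms] cm_cnj[OF Cb_cont[OF assms]])
qed

lemma C0_cont: "v \<in> C0 B \<Longrightarrow> continuous_map B euclidean v" by (simp add: C0_def)
lemma C0_zero: "v \<in> C0 B \<Longrightarrow> b \<notin> topspace B \<Longrightarrow> v b = 0" by (simp add: C0_def)
lemma C0_compact: "v \<in> C0 B \<Longrightarrow> e > 0 \<Longrightarrow> compactin B {b \<in> topspace B. norm (v b) \<ge> e}" by (simp add: C0_def)

lemma C0_cnj: assumes "v \<in> C0 B" shows "(\<lambda>x. cnj (v x)) \<in> C0 B"
  using assms unfolding C0_def by (auto simp: cm_cnj)

lemma C0_bound: assumes "v \<in> C0 B" obtains M where "M > 0" "\<And>b. norm (v b) \<le> M"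
proof -
  have K: "compactin B {b \<in> topspace B. norm (v b) \<ge> 1}" using C0_compact[OF assms] by simp
  have "compactin euclideanreal ((\<lambda>b. norm (v b)) ` {b \<in> topspace B. norm (v b) \<ge> 1})"
    by (rule image_compactin[OF K]) (simp add: C0_cont[OF assms] continuous_map_norm)
  then have "bounded ((\<lambda>b. norm (v b)) ` {b \<in> topspace B. norm (v b) \<ge> 1})"
    by (simp add: compact_imp_bounded)
  then obtain M where M: "\<And>b. b \<in> topspace B \<Longrightarrow> norm (v b) \<ge> 1 \<Longrightarrow> norm (v b) \<le> M"
    unfolding bounded_iff by fastforce
  show ?thesis
  proof (rule that[of "max M 1"])
    fix b show "norm (v b) \<le> max M 1"
      using M[of b] C0_zero[OF assms, of b] by (cases "b \<in> topspace B"; cases "norm (v b) \<ge> 1") auto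
  qed simp
qed


lemma HX_Cb: "h \<in> HX X r B \<Longrightarrow> h \<in> Cb X" unfolding HX_def by blast

lemma HX_zero: "h \<in> HX X r B \<Longrightarrow> x \<notin> topspace X \<Longrightarrow> h x = 0"
  by (rule Cb_zero[OF HX_Cb])

lemma HX_approx: assumes "h \<in> HX X r B" "e > 0" shows "\<exists>(n::nat) u v. (\<forall>i<n. u i \<in> Cb X \<and> v i \<in> C0 B) \<and>
       (\<forall>x\<in>topspace X. norm (h x - (\<Sum>i<n. u i x * v i (r x))) < e)"
  using assms(1)[unfolded HX_def, THEN CollectD, THEN conjunct2, rule_format, OF assms(2)] .

lemma HXI: "h \<in> Cb X \<Longrightarrow> (\<And>e. e > 0 \<Longrightarrow> \<exists>(n::nat) u v. (\<forall>i<n. u i \<in> Cb X \<and> v i \<in> C0 B) \<and>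
       (\<forall>x\<in>topspace X. norm (h x - (\<Sum>i<n. u i x * v i (r x))) < e)) \<Longrightarrow> h \<in> HX X r B"
  unfolding HX_def by (intro CollectI conjI allI impI) assumption+

lemma sum_lessThan_concat: "(\<Sum>i<m+n. F i) = (\<Sum>i<m. F i) + (\<Sum>i<n. F (m+i::nat))"
  by (induct n) (auto simp: add.assoc)

lemma HX_ideal: assumes w: "w \<in> Cb X" and h: "h \<in> HX X r B"
  shows "(\<lambda>x. w x * h x) \<in> HX X r B"
proof (rule HXI)
  show "(\<lambda>x. w x * h x) \<in> Cb X" using Cb_mult[OF w HX_Cb[OF h]] .
  fix e :: real assume e: "e > 0"
  obtain M where M: "M > 0" "\<And>x. norm (w x) \<le> M" using Cb_bound[OF w] by metis
  obtain n :: nat and u v where uv: "\<forall>i<n. u i \<in> Cb X \<and> v i \<in> C0 B"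
    and app: "\<forall>x\<in>topspace X. norm (h x - (\<Sum>i<n. u i x * v i (r x))) < e / M"
    using HX_approx[OF h, of "e/M"] e M by auto
  show "\<exists>(n::nat) u v. (\<forall>i<n. u i \<in> Cb X \<and> v i \<in> C0 B) \<and>
       (\<forall>x\<in>topspace X. norm (w x * h x - (\<Sum>i<n. u i x * v i (r x))) < e)"
  proof (intro exI conjI)
    show "\<forall>i<n. (\<lambda>i x. w x * u i x) i \<in> Cb X \<and> v i \<in> C0 B" using uv w by (simp add: Cb_mult)
    show "\<forall>x\<in>topspace X. norm (w x * h x - (\<Sum>i<n. w x * u i x * v i (r x))) < e"
    proof
      fix x assume x: "x \<in> topspace X"
      have "w x * h x - (\<Sum>i<n. w x * u i x * v i (r x)) = w x * (h x - (\<Sum>i<n. u i x * v i (r x)))"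
        by (simp add: sum_distrib_left right_diff_distrib mult.assoc)
      then have "norm (w x * h x - (\<Sum>i<n. w x * u i x * v i (r x))) = norm (w x) * norm (h x - (\<Sum>i<n. u i x * v i (r x)))"
        by (simp add: norm_mult)
      also have "\<dots> \<le> M * norm (h x - (\<Sum>i<n. u i x * v i (r x)))"
        by (rule mult_right_mono[OF M(2)]) simp
      also have "\<dots> < M * (e / M)" using app x M(1) by (intro mult_strict_left_mono) auto
      also have "\<dots> = e" using M by simp
      finally show "norm (w x * h x - (\<Sum>i<n. w x * u i x * v i (r x))) < e" .
    qed
  qed
qed

lemma HX_add: assumes h: "h \<in> HX X r B" and g: "g \<in> HX X r B"
  shows "(\<lambda>x. h x + g x) \<in> HX X r B"
proof (rule HXI)
  show "(\<lambda>x. h x + g x) \<in> Cb X" using Cb_add[OF HX_Cb[OF h] HX_Cb[OF g]] .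
  fix e :: real assume e: "e > 0"
  obtain n1 :: nat and u1 v1 where uv1: "\<forall>i<n1. u1 i \<in> Cb X \<and> v1 i \<in> C0 B"
    and app1: "\<forall>x\<in>topspace X. norm (h x - (\<Sum>i<n1. u1 i x * v1 i (r x))) < e / 2"
    using HX_approx[OF h, of "e/2"] e by auto
  obtain n2 :: nat and u2 v2 where uv2: "\<forall>i<n2. u2 i \<in> Cb X \<and> v2 i \<in> C0 B"
    and app2: "\<forall>x\<in>topspace X. norm (g x - (\<Sum>i<n2. u2 i x * v2 i (r x))) < e / 2"
    using HX_approx[OF g, of "e/2"] e by auto
  define U where "U i = (if i < n1 then u1 i else u2 (i - n1))" for i
  define V where "V i = (if i < n1 then v1 i else v2 (i - n1))" for i
  show "\<exists>(n::nat) u v. (\<forall>i<n. u i \<in> Cb X \<and> v i \<in> C0 B) \<and>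
       (\<forall>x\<in>topspace X. norm (h x + g x - (\<Sum>i<n. u i x * v i (r x))) < e)"
  proof (intro exI conjI)
    show "\<forall>i<n1+n2. U i \<in> Cb X \<and> V i \<in> C0 B"
      using uv1 uv2 by (auto simp: U_def V_def)
    show "\<forall>x\<in>topspace X. norm (h x + g x - (\<Sum>i<n1+n2. U i x * V i (r x))) < e"
    proof
      fix x assume x: "x \<in> topspace X"
      have sumeq: "(\<Sum>i<n1+n2. U i x * V i (r x)) = (\<Sum>i<n1. u1 i x * v1 i (r x)) + (\<Sum>i<n2. u2 i x * v2 i (r x))"
        unfolding sum_lessThan_concat by (simp add: U_def V_def)
      define A where "A = h x - (\<Sum>i<n1. u1 i x * v1 i (r x))"
      define C where "C = g x - (\<Sum>i<n2. u2 i x * v2 i (r x))"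
      have eq: "h x + g x - (\<Sum>i<n1+n2. U i x * V i (r x)) = A + C"
        unfolding A_def C_def sumeq by simp
      have "norm A < e/2" "norm C < e/2" using app1 app2 x by (auto simp: A_def C_def)
      then have "norm A + norm C < e" by simp
      then show "norm (h x + g x - (\<Sum>i<n1+n2. U i x * V i (r x))) < e"
        unfolding eq using norm_triangle_ineq[of A C] by linarith
    qed
  qed
qed

lemma HX_cnj: assumes h: "h \<in> HX X r B"
  shows "(\<lambda>x. cnj (h x)) \<in> HX X r B"
proof (rule HXI)
  show "(\<lambda>x. cnj (h x)) \<in> Cb X" using Cb_cnj[OF HX_Cb[OF h]] .
  fix e :: real assume e: "e > 0"
  obtain n :: nat and u v where uv: "\<forall>i<n. u i \<in> Cb X \<and> v i \<in> C0 B"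
    and app: "\<forall>x\<in>topspace X. norm (h x - (\<Sum>i<n. u i x * v i (r x))) < e"
    using HX_approx[OF h, of "e"] e by auto
  show "\<exists>(n::nat) u v. (\<forall>i<n. u i \<in> Cb X \<and> v i \<in> C0 B) \<and>
       (\<forall>x\<in>topspace X. norm (cnj (h x) - (\<Sum>i<n. u i x * v i (r x))) < e)"
  proof (intro exI conjI)
    show "\<forall>i<n. (\<lambda>i x. cnj (u i x)) i \<in> Cb X \<and> (\<lambda>i b. cnj (v i b)) i \<in> C0 B" using uv by (simp add: Cb_cnj C0_cnj)
    show "\<forall>x\<in>topspace X. norm (cnj (h x) - (\<Sum>i<n. cnj (u i x) * cnj (v i (r x)))) < e"
    proof
      fix x assume x: "x \<in> topspace X"
      have "cnj (h x) - (\<Sum>i<n. cnj (u i x) * cnj (v i (r x))) = cnj (h x - (\<Sum>i<n. u i x * v i (r x)))"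
        by (simp add: cnj_sum)
      then show "norm (cnj (h x) - (\<Sum>i<n. cnj (u i x) * cnj (v i (r x)))) < e" using app x by (simp only: complex_mod_cnj)
    qed
  qed
qed

lemma Cb_const: "(\<lambda>x. if x \<in> topspace X then c else 0) \<in> Cb X"
proof (rule CbI[where M="norm c"])
  show "continuous_map X euclidean (\<lambda>x. if x \<in> topspace X then c else 0)"
    by (rule continuous_map_eq[of X euclidean "\<lambda>x. c"]) auto
qed auto

lemma HX_scale: assumes h: "h \<in> HX X r B" shows "(\<lambda>x. c * h x) \<in> HX X r B"
proof -
  have "(\<lambda>x. (if x \<in> topspace X then c else 0) * h x) \<in> HX X r B"
    by (rule HX_ideal[OF Cb_const h])
  moreover have "(\<lambda>x. (if x \<in> topspace X then c else 0) * h x) = (\<lambda>x. c * h x)"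
    using HX_zero[OF h] by auto
  ultimately show ?thesis by simp
qed

lemma HX_mult: "h \<in> HX X r B \<Longrightarrow> g \<in> HX X r B \<Longrightarrow> (\<lambda>x. h x * g x) \<in> HX X r B"
  using HX_ideal HX_Cb by blast

lemma HX_diff: assumes "h \<in> HX X r B" "g \<in> HX X r B" shows "(\<lambda>x. h x - g x) \<in> HX X r B"
  using HX_add[OF assms(1) HX_scale[OF assms(2), of "-1"]] by simp



lemma cm_of_real: "continuous_map X euclideanreal g \<Longrightarrow> continuous_map X euclidean (\<lambda>x. complex_of_real (g x))"
  by (simp add: continuous_map_atin tendsto_of_real)

lemma urysohn_C0:
  assumes H: "Hausdorff_space B" and L: "locally_compact_space B" and K: "compactin B K"
  obtains w where "w \<in> C0 B" "\<forall>b\<in>K. w b = 1" "\<forall>b. norm (1 - w b) \<le> 1"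
proof -
  obtain U M where U: "openin B U" "compactin B M" "closedin B M" "K \<subseteq> U" "U \<subseteq> M"
    using L K H locally_compact_space_compact_closed_compact by metis
  have cr: "completely_regular_space B"
    using L H locally_compact_regular_imp_completely_regular_space by blast
  have T: "closedin B (topspace B - U)" using U(1) by blast
  have dj: "disjnt K (topspace B - U)" using U(4) by (auto simp: disjnt_def)
  obtain g where g: "continuous_map B (subtopology euclidean {0..1::real}) g" "g ` (topspace B - U) \<subseteq> {0}" "g ` K \<subseteq> {1}"
    using Urysohn_completely_regular_compact_closed[of 0 1 B K "topspace B - U"] cr K T dj by auto
  have gc: "continuous_map B euclideanreal g" and g01: "\<And>b. b \<in> topspace B \<Longrightarrow> g b \<in> {0..1}"
    using g(1) unfolding continuous_map_in_subtopology by auto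
  define w where "w b = (if b \<in> topspace B then complex_of_real (g b) else 0)" for b
  have wc: "continuous_map B euclidean w"
    by (rule continuous_map_eq[OF cm_of_real[OF gc]]) (simp add: w_def)
  show ?thesis
  proof (rule that)
    show "w \<in> C0 B" unfolding C0_def mem_Collect_eq
    proof (intro conjI allI impI)
      show "continuous_map B euclidean w" by (rule wc)
      fix e :: real assume e: "e > 0"
      have sub: "{b \<in> topspace B. norm (w b) \<ge> e} \<subseteq> M"
      proof
        fix b assume b: "b \<in> {b \<in> topspace B. norm (w b) \<ge> e}"
        show "b \<in> M"
        proof (rule ccontr)
          assume "b \<notin> M"
          then have "b \<in> topspace B - U" using b U(5) by auto
          then have "g b = 0" using g(2) by auto
          then show False using b e by (auto simp: w_def)
        qed
      qed
      have "closedin B {b \<in> topspace B. norm (w b) \<in> {e..}}"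
        by (rule closedin_continuous_map_preimage[OF continuous_map_norm[OF wc]]) simp
      then have "closedin B {b \<in> topspace B. norm (w b) \<ge> e}" by simp
      then show "compactin B {b \<in> topspace B. norm (w b) \<ge> e}"
        using closed_compactin[OF U(2) sub] by blast
    next
      fix b assume "b \<notin> topspace B" then show "w b = 0" by (simp add: w_def)
    qed
    show "\<forall>b\<in>K. w b = 1" using g(3) compactin_subset_topspace[OF K] by (auto simp: w_def)
    show "\<forall>b. norm (1 - w b) \<le> 1"
    proof
      fix b show "norm (1 - w b) \<le> 1"
      proof (cases "b \<in> topspace B")
        case True
        then have "g b \<in> {0..1}" by (rule g01)
        then have "norm (1 - complex_of_real (g b)) = 1 - g b"
          by (metis abs_of_nonneg atLeastAtMost_iff diff_ge_0_iff_ge norm_of_real of_real_1 of_real_diff)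
        then show ?thesis using True \<open>g b \<in> {0..1}\<close> by (simp add: w_def)
      qed (simp add: w_def)
    qed
  qed
qed

lemma Cb_comp: assumes u: "u \<in> Cb X2" and f: "continuous_map X1 X2 f"
  shows "(\<lambda>y. if y \<in> topspace X1 then u (f y) else 0) \<in> Cb X1"
proof -
  obtain M where M: "M > 0" "\<And>x. norm (u x) \<le> M" using Cb_bound[OF u] by metis
  show ?thesis
  proof (rule CbI[where M=M])
    show "continuous_map X1 euclidean (\<lambda>y. if y \<in> topspace X1 then u (f y) else 0)"
      by (rule continuous_map_eq[OF continuous_map_compose[OF f Cb_cont[OF u]]]) simp
  qed (use M in auto)
qed

lemma C0_Cb_comp: assumes v: "v \<in> C0 B" and r: "continuous_map X B r"
  shows "(\<lambda>y. if y \<in> topspace X then v (r y) else 0) \<in> Cb X"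
proof -
  obtain M where M: "M > 0" "\<And>x. norm (v x) \<le> M" using C0_bound[OF v] by metis
  show ?thesis
  proof (rule CbI[where M=M])
    show "continuous_map X euclidean (\<lambda>y. if y \<in> topspace X then v (r y) else 0)"
      by (rule continuous_map_eq[OF continuous_map_compose[OF r C0_cont[OF v]]]) simp
  qed (use M in auto)
qed

lemma C0_comp: assumes v: "v \<in> C0 B2" and f0: "continuous_map B1 B2 f0"
  and pr: "\<forall>K. compactin B2 K \<longrightarrow> compactin B1 {b \<in> topspace B1. f0 b \<in> K}"
  shows "(\<lambda>b. if b \<in> topspace B1 then v (f0 b) else 0) \<in> C0 B1"
  unfolding C0_def mem_Collect_eq
proof (intro conjI allI impI)
  show "continuous_map B1 euclidean (\<lambda>b. if b \<in> topspace B1 then v (f0 b) else 0)"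
    by (rule continuous_map_eq[OF continuous_map_compose[OF f0 C0_cont[OF v]]]) simp
  fix e :: real assume e: "e > 0"
  have "{b \<in> topspace B1. e \<le> norm (if b \<in> topspace B1 then v (f0 b) else 0)}
      = {b \<in> topspace B1. f0 b \<in> {c \<in> topspace B2. e \<le> norm (v c)}}"
    using f0 by (auto dest: continuous_map_image_subset_topspace)
  moreover have "compactin B1 {b \<in> topspace B1. f0 b \<in> {c \<in> topspace B2. e \<le> norm (v c)}}"
    using pr C0_compact[OF v e] by blast
  ultimately show "compactin B1 {b \<in> topspace B1. e \<le> norm (if b \<in> topspace B1 then v (f0 b) else 0)}"
    by (simp only:)
qed simp



lemma cm_in: "continuous_map X Y f \<Longrightarrow> x \<in> topspace X \<Longrightarrow> f x \<in> topspace Y"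
  by (meson continuous_map_image_subset_topspace image_subset_iff)

lemma transA:
  assumes f: "continuous_map X1 X2 f" and r1: "continuous_map X1 B1 r1"
    and f0: "continuous_map B1 B2 f0"
    and comm: "\<forall>x\<in>topspace X1. r2 (f x) = f0 (r1 x)"
    and pr: "\<forall>K. compactin B2 K \<longrightarrow> compactin B1 {b \<in> topspace B1. f0 b \<in> K}"
    and h: "h \<in> HX X2 r2 B2"
  shows "(\<lambda>y. if y \<in> topspace X1 then h (f y) else 0) \<in> HX X1 r1 B1"
proof (rule HXI)
  show "(\<lambda>y. if y \<in> topspace X1 then h (f y) else 0) \<in> Cb X1" by (rule Cb_comp[OF HX_Cb[OF h] f])
  fix e :: real assume e: "e > 0"
  obtain n :: nat and u v where uv: "\<forall>i<n. u i \<in> Cb X2 \<and> v i \<in> C0 B2"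
    and app: "\<forall>x\<in>topspace X2. norm (h x - (\<Sum>i<n. u i x * v i (r2 x))) < e"
    using HX_approx[OF h e] by blast
  define U where "U i = (\<lambda>y. if y \<in> topspace X1 then u i (f y) else 0)" for i
  define V where "V i = (\<lambda>b. if b \<in> topspace B1 then v i (f0 b) else 0)" for i
  show "\<exists>(n::nat) u v. (\<forall>i<n. u i \<in> Cb X1 \<and> v i \<in> C0 B1) \<and>
       (\<forall>x\<in>topspace X1. norm ((if x \<in> topspace X1 then h (f x) else 0) - (\<Sum>i<n. u i x * v i (r1 x))) < e)"
  proof (intro exI conjI)
    show "\<forall>i<n. U i \<in> Cb X1 \<and> V i \<in> C0 B1"
      using uv Cb_comp[OF _ f] C0_comp[OF _ f0 pr] by (simp add: U_def V_def)
    show "\<forall>x\<in>topspace X1. norm ((if x \<in> topspace X1 then h (f x) else 0) - (\<Sum>i<n. U i x * V i (r1 x))) < e"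
    proof
      fix x assume x: "x \<in> topspace X1"
      have fx: "f x \<in> topspace X2" by (rule cm_in[OF f x])
      have rx: "r1 x \<in> topspace B1" by (rule cm_in[OF r1 x])
      have "(\<Sum>i<n. U i x * V i (r1 x)) = (\<Sum>i<n. u i (f x) * v i (r2 (f x)))"
        using x rx comm by (simp add: U_def V_def)
      then show "norm ((if x \<in> topspace X1 then h (f x) else 0) - (\<Sum>i<n. U i x * V i (r1 x))) < e"
        using app fx x by simp
    qed
  qed
qed

lemma approx_term:
  assumes u: "u \<in> Cb X1" and v: "v \<in> C0 B1" and d: "\<delta> > 0"
    and r1: "continuous_map X1 B1 r1" and f0: "continuous_map B1 B2 f0"
    and H: "Hausdorff_space B2" and L: "locally_compact_space B2"
  shows "\<exists>u' w. u' \<in> Cb X1 \<and> w \<in> C0 B2 \<and> (\<forall>y\<in>topspace X1. norm (u y * v (r1 y) - u' y * w (f0 (r1 y))) < \<delta>)"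
proof -
  obtain M where M: "M > 0" "\<And>x. norm (u x) \<le> M" using Cb_bound[OF u] by metis
  define \<epsilon> where "\<epsilon> = \<delta> / M"
  have eps: "\<epsilon> > 0" using d M by (simp add: \<epsilon>_def)
  define K where "K = {b \<in> topspace B1. norm (v b) \<ge> \<epsilon>}"
  have K: "compactin B1 K" unfolding K_def by (rule C0_compact[OF v eps])
  have K': "compactin B2 (f0 ` K)" by (rule image_compactin[OF K f0])
  obtain w where w: "w \<in> C0 B2" "\<forall>b\<in>f0 ` K. w b = 1" "\<forall>b. norm (1 - w b) \<le> 1"
    using urysohn_C0[OF H L K'] by metis
  define u' where "u' y = u y * (if y \<in> topspace X1 then v (r1 y) else 0)" for y
  have u': "u' \<in> Cb X1" unfolding u'_def by (rule Cb_mult[OF u C0_Cb_comp[OF v r1]])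
  show ?thesis
  proof (intro exI conjI)
    show "u' \<in> Cb X1" by (rule u')
    show "w \<in> C0 B2" by (rule w(1))
    show "\<forall>y\<in>topspace X1. norm (u y * v (r1 y) - u' y * w (f0 (r1 y))) < \<delta>"
    proof
      fix y assume y: "y \<in> topspace X1"
      have ry: "r1 y \<in> topspace B1" by (rule cm_in[OF r1 y])
      have eq: "u y * v (r1 y) - u' y * w (f0 (r1 y)) = u y * v (r1 y) * (1 - w (f0 (r1 y)))"
        using y by (simp add: u'_def algebra_simps)
      show "norm (u y * v (r1 y) - u' y * w (f0 (r1 y))) < \<delta>"
      proof (cases "norm (v (r1 y)) \<ge> \<epsilon>")
        case True
        then have "r1 y \<in> K" using ry by (simp add: K_def)
        then have "w (f0 (r1 y)) = 1" using w(2) by blast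
        then show ?thesis using eq d by simp
      next
        case False
        have "norm (u y * v (r1 y) * (1 - w (f0 (r1 y)))) = norm (u y) * norm (v (r1 y)) * norm (1 - w (f0 (r1 y)))"
          by (simp add: norm_mult)
        also have "\<dots> \<le> M * norm (v (r1 y)) * 1"
          by (intro mult_mono M(2) w(3)[rule_format] mult_nonneg_nonneg) (use M(1) in auto)
        also have "\<dots> < M * \<epsilon>" using False M by simp
        also have "\<dots> = \<delta>" using M by (simp add: \<epsilon>_def)
        finally show ?thesis using eq by simp
      qed
    qed
  qed
qed


lemma transB:
  assumes fi: "continuous_map X2 X1 fi" and r1: "continuous_map X1 B1 r1"
    and f0: "continuous_map B1 B2 f0"
    and comm: "\<forall>z\<in>topspace X2. r2 z = f0 (r1 (fi z))"
    and H: "Hausdorff_space B2" and L: "locally_compact_space B2"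
    and g: "g \<in> HX X1 r1 B1"
  shows "(\<lambda>z. if z \<in> topspace X2 then g (fi z) else 0) \<in> HX X2 r2 B2"
proof (rule HXI)
  show "(\<lambda>z. if z \<in> topspace X2 then g (fi z) else 0) \<in> Cb X2" by (rule Cb_comp[OF HX_Cb[OF g] fi])
  fix e :: real assume e: "e > 0"
  obtain n :: nat and u v where uv: "\<forall>i<n. u i \<in> Cb X1 \<and> v i \<in> C0 B1"
    and app: "\<forall>x\<in>topspace X1. norm (g x - (\<Sum>i<n. u i x * v i (r1 x))) < e/2"
    using HX_approx[OF g, of "e/2"] e by auto
  define \<delta> where "\<delta> = e / (2 * (real n + 1))"
  have d: "\<delta> > 0" using e by (simp add: \<delta>_def)
  have nd: "real n * \<delta> \<le> e / 2" using e by (simp add: \<delta>_def field_simps)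
  have "\<forall>i\<in>{..<n}. \<exists>u' w. u' \<in> Cb X1 \<and> w \<in> C0 B2 \<and> (\<forall>y\<in>topspace X1. norm (u i y * v i (r1 y) - u' y * w (f0 (r1 y))) < \<delta>)"
  proof
    fix i assume "i \<in> {..<n}"
    then have "u i \<in> Cb X1" "v i \<in> C0 B1" using uv by auto
    then show "\<exists>u' w. u' \<in> Cb X1 \<and> w \<in> C0 B2 \<and> (\<forall>y\<in>topspace X1. norm (u i y * v i (r1 y) - u' y * w (f0 (r1 y))) < \<delta>)"
      using approx_term[OF _ _ d r1 f0 H L] by blast
  qed
  then have "\<exists>U. \<forall>i\<in>{..<n}. \<exists>w. U i \<in> Cb X1 \<and> w \<in> C0 B2 \<and> (\<forall>y\<in>topspace X1. norm (u i y * v i (r1 y) - U i y * w (f0 (r1 y))) < \<delta>)"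
    by (rule bchoice)
  then obtain U where "\<forall>i\<in>{..<n}. \<exists>w. U i \<in> Cb X1 \<and> w \<in> C0 B2 \<and> (\<forall>y\<in>topspace X1. norm (u i y * v i (r1 y) - U i y * w (f0 (r1 y))) < \<delta>)"
    by (elim exE) assumption
  then have "\<exists>W. \<forall>i\<in>{..<n}. U i \<in> Cb X1 \<and> W i \<in> C0 B2 \<and> (\<forall>y\<in>topspace X1. norm (u i y * v i (r1 y) - U i y * W i (f0 (r1 y))) < \<delta>)"
    by (rule bchoice)
  then obtain W where UW: "\<forall>i\<in>{..<n}. U i \<in> Cb X1 \<and> W i \<in> C0 B2 \<and> (\<forall>y\<in>topspace X1. norm (u i y * v i (r1 y) - U i y * W i (f0 (r1 y))) < \<delta>)"
    by (elim exE) assumption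
  define US where "US i = (\<lambda>z. if z \<in> topspace X2 then U i (fi z) else 0)" for i
  show "\<exists>(n::nat) u v. (\<forall>i<n. u i \<in> Cb X2 \<and> v i \<in> C0 B2) \<and>
       (\<forall>x\<in>topspace X2. norm ((if x \<in> topspace X2 then g (fi x) else 0) - (\<Sum>i<n. u i x * v i (r2 x))) < e)"
  proof (intro exI conjI)
    show "\<forall>i<n. US i \<in> Cb X2 \<and> W i \<in> C0 B2"
      using UW Cb_comp[OF _ fi] by (simp add: US_def)
    show "\<forall>x\<in>topspace X2. norm ((if x \<in> topspace X2 then g (fi x) else 0) - (\<Sum>i<n. US i x * W i (r2 x))) < e"
    proof
      fix z assume z: "z \<in> topspace X2"
      define y where "y = fi z"
      have y: "y \<in> topspace X1" unfolding y_def by (rule cm_in[OF fi z])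
      have s: "(\<Sum>i<n. US i z * W i (r2 z)) = (\<Sum>i<n. U i y * W i (f0 (r1 y)))"
        using z comm by (simp add: US_def y_def)
      define A where "A = g y - (\<Sum>i<n. u i y * v i (r1 y))"
      define D where "D = (\<Sum>i<n. u i y * v i (r1 y) - U i y * W i (f0 (r1 y)))"
      have eq: "(if z \<in> topspace X2 then g (fi z) else 0) - (\<Sum>i<n. US i z * W i (r2 z)) = A + D"
        unfolding s A_def D_def sum_subtractf using z by (simp add: y_def)
      have nA: "norm A < e/2" using app y by (simp add: A_def)
      have "norm D \<le> (\<Sum>i<n. norm (u i y * v i (r1 y) - U i y * W i (f0 (r1 y))))"
        unfolding D_def by (rule norm_sum)
      also have "\<dots> \<le> (\<Sum>i<n. \<delta>)"
        by (rule sum_mono) (use UW y in \<open>auto simp: less_imp_le\<close>)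
      also have "\<dots> = real n * \<delta>" by simp
      finally have nD: "norm D \<le> e/2" using nd by linarith
      show "norm ((if z \<in> topspace X2 then g (fi z) else 0) - (\<Sum>i<n. US i z * W i (r2 z))) < e"
        unfolding eq using norm_triangle_ineq[of A D] nA nD by linarith
    qed
  qed
qed



lemma ch_D:
  assumes "\<phi> \<in> chars X r B"
  shows "\<And>h g. h \<in> HX X r B \<Longrightarrow> g \<in> HX X r B \<Longrightarrow> \<phi> (\<lambda>x. h x + g x) = \<phi> h + \<phi> g"
    and "\<And>h g. h \<in> HX X r B \<Longrightarrow> g \<in> HX X r B \<Longrightarrow> \<phi> (\<lambda>x. h x * g x) = \<phi> h * \<phi> g"
    and "\<And>c h. h \<in> HX X r B \<Longrightarrow> \<phi> (\<lambda>x. c * h x) = c * \<phi> h"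
    and "\<exists>h\<in>HX X r B. \<phi> h \<noteq> 0"
    and "\<phi> \<in> PiE (HX X r B) (\<lambda>_. UNIV)"
  using assms unfolding chars_def mem_Collect_eq by blast+

lemma ch_diff: assumes "\<phi> \<in> chars X r B" "h \<in> HX X r B" "g \<in> HX X r B"
  shows "\<phi> (\<lambda>x. h x - g x) = \<phi> h - \<phi> g"
proof -
  have "\<phi> (\<lambda>x. h x + (\<lambda>x. (-1) * g x) x) = \<phi> h + \<phi> (\<lambda>x. (-1) * g x)"
    by (rule ch_D(1)[OF assms(1,2) HX_scale[OF assms(3)]])
  then show ?thesis using ch_D(3)[OF assms(1,3), of "-1"] by simp
qed

lemma HX_zero_fun: assumes "h \<in> HX X r B" shows "(\<lambda>x. 0) \<in> HX X r B"
  using HX_scale[OF assms, of 0] by simp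

lemma ch_zero: assumes "\<phi> \<in> chars X r B" shows "\<phi> (\<lambda>x. 0) = 0"
proof -
  obtain h where h: "h \<in> HX X r B" using ch_D(4)[OF assms] by blast
  show ?thesis using ch_D(3)[OF assms h, of 0] by simp
qed

lemma ch_sum:
  assumes ph: "\<phi> \<in> chars X r B" and F: "finite F" and G: "\<forall>i\<in>F. G i \<in> HX X r B"
  shows "(\<lambda>x. \<Sum>i\<in>F. G i x) \<in> HX X r B \<and> \<phi> (\<lambda>x. \<Sum>i\<in>F. G i x) = (\<Sum>i\<in>F. \<phi> (G i))"
  using F G
proof (induction F rule: finite_induct)
  case empty
  obtain h where h: "h \<in> HX X r B" using ch_D(4)[OF ph] by blast
  show ?case using HX_zero_fun[OF h] ch_zero[OF ph] by simp
next
  case (insert a F)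
  then have IH: "(\<lambda>x. \<Sum>i\<in>F. G i x) \<in> HX X r B" "\<phi> (\<lambda>x. \<Sum>i\<in>F. G i x) = (\<Sum>i\<in>F. \<phi> (G i))"
    and Ga: "G a \<in> HX X r B" by auto
  have e: "(\<lambda>x. \<Sum>i\<in>insert a F. G i x) = (\<lambda>x. G a x + (\<lambda>x. \<Sum>i\<in>F. G i x) x)"
    using insert(1,2) by simp
  show ?case unfolding e
    using HX_add[OF Ga IH(1)] ch_D(1)[OF ph Ga IH(1)] IH(2) insert(1,2) by simp
qed

lemma spectral:
  assumes ph: "\<phi> \<in> chars X r B" and t: "t \<in> HX X r B" and c: "c > 0"
    and low: "\<forall>x\<in>topspace X. norm (1 - t x) \<ge> c"
  shows "\<phi> t \<noteq> 1"
proof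
  assume one: "\<phi> t = 1"
  define wt where "wt x = (if x \<in> topspace X then inverse (1 - t x) else 0)" for x
  have nz: "\<forall>x\<in>topspace X. 1 - t x \<noteq> 0" using low c by force
  have wt: "wt \<in> Cb X"
  proof (rule CbI[where M="1/c"])
    have "continuous_map X euclidean (\<lambda>x. 1 - t x)"
      by (intro continuous_map_diff continuous_map_canonical_const Cb_cont[OF HX_Cb[OF t]])
    then show "continuous_map X euclidean wt"
      unfolding wt_def by (rule continuous_map_eq[OF cm_inverse[OF _ nz]]) simp
    fix x assume x: "x \<in> topspace X"
    have "norm (inverse (1 - t x)) = inverse (norm (1 - t x))" by (simp add: norm_inverse)
    also have "\<dots> \<le> inverse c" using low x c by (simp add: le_imp_inverse_le)
    finally show "norm (wt x) \<le> 1/c" using x by (simp add: wt_def inverse_eq_divide)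
  qed (simp add: wt_def)
  define q where "q = (\<lambda>x. wt x * t x)"
  have q: "q \<in> HX X r B" unfolding q_def by (rule HX_ideal[OF wt t])
  have qt: "(\<lambda>x. q x * t x) \<in> HX X r B" by (rule HX_mult[OF q t])
  have qe: "q = (\<lambda>x. t x + (\<lambda>x. q x * t x) x)"
  proof
    fix x show "q x = t x + q x * t x"
    proof (cases "x \<in> topspace X")
      case True
      then have "1 - t x \<noteq> 0" using nz by blast
      then show ?thesis using True by (simp add: q_def wt_def field_simps)
    qed (simp add: q_def wt_def HX_zero[OF t])
  qed
  have "\<phi> q = \<phi> t + \<phi> q * \<phi> t"
    using ch_D(1)[OF ph t qt] ch_D(2)[OF ph q t] qe by metis
  then show False using one by simp
qed


lemma dense_core:
  assumes ph: "\<phi> \<in> chars X r B" and F: "finite F" and FH: "F \<subseteq> HX X r B" and e: "\<epsilon> > 0"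
  shows "\<exists>x\<in>topspace X. (\<exists>h\<in>HX X r B. h x \<noteq> 0) \<and> (\<forall>h\<in>F. norm (h x - \<phi> h) < \<epsilon>)"
proof (rule ccontr)
  assume nex: "\<not> ?thesis"
  obtain h0 where h0: "h0 \<in> HX X r B" "\<phi> h0 \<noteq> 0" using ch_D(4)[OF ph] by blast
  define h1 where "h1 = (\<lambda>x. (1 / \<phi> h0) * h0 x)"
  have h1: "h1 \<in> HX X r B" unfolding h1_def by (rule HX_scale[OF h0(1)])
  have "\<phi> h1 = (1 / \<phi> h0) * \<phi> h0" unfolding h1_def by (rule ch_D(3)[OF ph h0(1)])
  then have ph1: "\<phi> h1 = 1" using h0(2) by simp
  define C where "C = 1 + (\<Sum>h\<in>F. norm (\<phi> h))"
  have C1: "C \<ge> 1" unfolding C_def by (simp add: sum_nonneg)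
  have Cb: "\<And>h. h \<in> F \<Longrightarrow> norm (\<phi> h) \<le> C"
  proof -
    fix h assume "h \<in> F"
    then have "norm (\<phi> h) \<le> (\<Sum>h\<in>F. norm (\<phi> h))" by (intro member_le_sum F) auto
    then show "norm (\<phi> h) \<le> C" unfolding C_def by simp
  qed
  define \<delta> where "\<delta> = min (1/2) (\<epsilon> / (2 * C))"
  have d: "\<delta> > 0" "\<delta> \<le> 1/2" "C * \<delta> \<le> \<epsilon> / 2"
    using e C1 by (auto simp: \<delta>_def min_def field_simps)
  define g where "g h = (\<lambda>x. h x - (\<lambda>x. \<phi> h * h1 x) x)" for h
  have gH: "g h \<in> HX X r B" and pg: "\<phi> (g h) = 0" if "h \<in> HX X r B" for h
  proof -
    show "g h \<in> HX X r B" unfolding g_def by (rule HX_diff[OF that HX_scale[OF h1]])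
    show "\<phi> (g h) = 0" unfolding g_def
      using ch_diff[OF ph that HX_scale[OF h1]] ch_D(3)[OF ph h1] ph1 by simp
  qed
  define G where "G h = (\<lambda>x. g h x * (\<lambda>x. cnj (g h x)) x)" for h
  have GH: "G h \<in> HX X r B" and pG: "\<phi> (G h) = 0" if "h \<in> HX X r B" for h
  proof -
    show "G h \<in> HX X r B" unfolding G_def by (rule HX_mult[OF gH[OF that] HX_cnj[OF gH[OF that]]])
    show "\<phi> (G h) = 0" unfolding G_def
      using ch_D(2)[OF ph gH[OF that] HX_cnj[OF gH[OF that]]] pg[OF that] by simp
  qed
  define S where "S = (\<lambda>x. \<Sum>h\<in>F. G h x)"
  have SS: "S \<in> HX X r B \<and> \<phi> S = (\<Sum>h\<in>F. \<phi> (G h))"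
    unfolding S_def by (rule ch_sum[OF ph F]) (use GH FH in blast)
  have pS: "\<phi> S = 0" using SS pG FH by (simp add: subset_iff)
  define c1 where "c1 = (\<lambda>x. cnj (h1 x))"
  have c1: "c1 \<in> HX X r B" unfolding c1_def by (rule HX_cnj[OF h1])
  define a where "a = (\<lambda>x. h1 x + c1 x)"
  have aH: "a \<in> HX X r B" unfolding a_def by (rule HX_add[OF h1 c1])
  have pa: "\<phi> a = 1 + \<phi> c1" unfolding a_def using ch_D(1)[OF ph h1 c1] ph1 by simp
  define b where "b = (\<lambda>x. h1 x * c1 x)"
  have bH: "b \<in> HX X r B" unfolding b_def by (rule HX_mult[OF h1 c1])
  have pb: "\<phi> b = \<phi> c1" unfolding b_def using ch_D(2)[OF ph h1 c1] ph1 by simp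
  define ab where "ab = (\<lambda>x. a x - b x)"
  have abH: "ab \<in> HX X r B" unfolding ab_def by (rule HX_diff[OF aH bH])
  have pab: "\<phi> ab = 1" unfolding ab_def using ch_diff[OF ph aH bH] pa pb by simp
  define t where "t = (\<lambda>x. ab x - S x)"
  have tH: "t \<in> HX X r B" unfolding t_def by (rule HX_diff[OF abH SS[THEN conjunct1]])
  have pt: "\<phi> t = 1" unfolding t_def using ch_diff[OF ph abH SS[THEN conjunct1]] pab pS by simp
  define c where "c = min (\<delta>^2) ((\<epsilon>/2)^2)"
  have c: "c > 0" using d e by (simp add: c_def)
  have low: "\<forall>x\<in>topspace X. norm (1 - t x) \<ge> c"
  proof
    fix x assume x: "x \<in> topspace X"
    define R where "R = norm (1 - h1 x) ^ 2 + (\<Sum>h\<in>F. norm (g h x) ^ 2)"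
    have sq: "\<And>z::complex. z * cnj z = complex_of_real (norm z ^ 2)"
      by (metis complex_norm_square of_real_power)
    have "1 - t x = (1 - h1 x) * cnj (1 - h1 x) + S x"
      by (simp add: t_def ab_def a_def b_def c1_def algebra_simps)
    also have "\<dots> = complex_of_real R"
      unfolding R_def S_def G_def sq by simp
    finally have tR: "1 - t x = complex_of_real R" .
    have R0: "R \<ge> norm (1 - h1 x) ^ 2" unfolding R_def by (simp add: sum_nonneg)
    have Rg: "R \<ge> norm (g h x) ^ 2" if "h \<in> F" for h
    proof -
      have "norm (g h x) ^ 2 \<le> (\<Sum>h\<in>F. norm (g h x) ^ 2)" by (intro member_le_sum F that) auto
      then show ?thesis unfolding R_def using zero_le_power2[of "norm (1 - h1 x)"] by linarith
    qed
    have R00: "0 \<le> R" unfolding R_def by (simp add: sum_nonneg)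
    have nR: "norm (1 - t x) = R" using tR R00 by simp
    show "norm (1 - t x) \<ge> c"
    proof (cases "norm (1 - h1 x) \<ge> \<delta>")
      case True
      then have "\<delta>^2 \<le> norm (1 - h1 x) ^ 2" using d by (intro power_mono) auto
      then show ?thesis using nR R0 by (simp add: c_def)
    next
      case False
      have "1 = norm ((1 - h1 x) + h1 x)" by simp
      also have "\<dots> \<le> norm (1 - h1 x) + norm (h1 x)" by (rule norm_triangle_ineq)
      finally have "norm (h1 x) \<ge> 1/2" using d False by linarith
      then have "h1 x \<noteq> 0" by auto
      then have "\<not> (\<forall>h\<in>F. norm (h x - \<phi> h) < \<epsilon>)" using nex x h1 by blast
      then obtain h where hF: "h \<in> F" and hb: "norm (h x - \<phi> h) \<ge> \<epsilon>"
        by (auto simp: not_less)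
      have eqg: "h x - \<phi> h = g h x - \<phi> h * (1 - h1 x)" by (simp add: g_def algebra_simps)
      have "norm (h x - \<phi> h) \<le> norm (g h x) + norm (\<phi> h * (1 - h1 x))"
        unfolding eqg by (rule norm_triangle_ineq4)
      moreover have "norm (\<phi> h * (1 - h1 x)) \<le> C * \<delta>"
        unfolding norm_mult using Cb[OF hF] False C1 by (intro mult_mono) auto
      ultimately have "norm (g h x) \<ge> \<epsilon>/2" using hb d by linarith
      then have "(\<epsilon>/2)^2 \<le> norm (g h x) ^ 2" using e by (intro power_mono) auto
      then show ?thesis using nR Rg[OF hF] by (simp add: c_def)
    qed
  qed
  show False using spectral[OF ph tH c low] pt by simp
qed



lemma iota_chars:
  assumes x: "x \<in> topspace X" and h: "h \<in> HX X r B" "h x \<noteq> 0"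
  shows "iota X r B x \<in> chars X r B"
  unfolding chars_def iota_def mem_Collect_eq
proof (intro conjI ballI allI)
  show "restrict (\<lambda>h. h x) (HX X r B) \<in> PiE (HX X r B) (\<lambda>_. UNIV)" by simp
  fix h g assume h: "h \<in> HX X r B" and g: "g \<in> HX X r B"
  show "restrict (\<lambda>h. h x) (HX X r B) (\<lambda>x. h x + g x) = restrict (\<lambda>h. h x) (HX X r B) h + restrict (\<lambda>h. h x) (HX X r B) g"
    using HX_add[OF h g] h g by simp
  show "restrict (\<lambda>h. h x) (HX X r B) (\<lambda>x. h x * g x) = restrict (\<lambda>h. h x) (HX X r B) h * restrict (\<lambda>h. h x) (HX X r B) g"
    using HX_mult[OF h g] h g by simp
next
  fix c h assume h: "h \<in> HX X r B"
  show "restrict (\<lambda>h. h x) (HX X r B) (\<lambda>x. c * h x) = c * restrict (\<lambda>h. h x) (HX X r B) h"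
    using HX_scale[OF h] h by simp
next
  show "\<exists>h\<in>HX X r B. restrict (\<lambda>h. h x) (HX X r B) h \<noteq> 0" using h by auto
qed

lemma topspace_betaB: "topspace (betaB X r B) = chars X r B"
  unfolding betaB_def topspace_subtopology topspace_product_topology
  by (auto simp: chars_def)

lemma Hausdorff_betaB: "Hausdorff_space (betaB X r B)"
  unfolding betaB_def
  by (rule Hausdorff_space_subtopology) (simp add: Hausdorff_space_product_topology)

lemma density:
  assumes ph: "\<phi> \<in> chars X r B" and W: "openin (betaB X r B) W" and phW: "\<phi> \<in> W"
  shows "\<exists>x\<in>topspace X. iota X r B x \<in> W"
proof -
  obtain T where T: "openin (product_topology (\<lambda>_. euclidean) (HX X r B)) T" and WT: "W = T \<inter> chars X r B"
    using W unfolding betaB_def openin_subtopology by blast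
  have "\<phi> \<in> T" using phW WT by blast
  then obtain U where U: "finite {i \<in> HX X r B. U i \<noteq> topspace euclidean}"
     "\<forall>i\<in>HX X r B. openin euclidean (U i)" "\<phi> \<in> PiE (HX X r B) U" "PiE (HX X r B) U \<subseteq> T"
    using T unfolding openin_product_topology_alt by blast
  define F where "F = {i \<in> HX X r B. U i \<noteq> UNIV}"
  have F: "finite F" using U(1) by (simp add: F_def)
  have FH: "F \<subseteq> HX X r B" by (auto simp: F_def)
  have "\<forall>h\<in>F. \<exists>e>0. ball (\<phi> h) e \<subseteq> U h"
  proof
    fix h assume "h \<in> F"
    then have hH: "h \<in> HX X r B" by (simp add: F_def)
    then have "open (U h)" using U(2) by simp
    moreover have "\<phi> h \<in> U h" using U(3) hH by (simp add: PiE_iff)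
    ultimately show "\<exists>e>0. ball (\<phi> h) e \<subseteq> U h" by (simp add: open_contains_ball)
  qed
  then obtain E where E: "\<forall>h\<in>F. E h > 0 \<and> ball (\<phi> h) (E h) \<subseteq> U h"
    by (metis bchoice)
  define \<epsilon> where "\<epsilon> = Min (insert 1 (E ` F))"
  have eps: "\<epsilon> > 0" unfolding \<epsilon>_def using F E by (subst Min_gr_iff) auto
  have epsle: "\<And>h. h \<in> F \<Longrightarrow> \<epsilon> \<le> E h" unfolding \<epsilon>_def using F by (intro Min_le) auto
  obtain x where x: "x \<in> topspace X" and hx: "\<exists>h\<in>HX X r B. h x \<noteq> 0"
    and close: "\<forall>h\<in>F. norm (h x - \<phi> h) < \<epsilon>"
    using dense_core[OF ph F FH eps] by blast
  have ic: "iota X r B x \<in> chars X r B" using iota_chars[OF x] hx by blast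
  have "iota X r B x \<in> PiE (HX X r B) U"
    unfolding PiE_iff
  proof (intro conjI ballI)
    fix h assume hH: "h \<in> HX X r B"
    show "iota X r B x h \<in> U h"
    proof (cases "h \<in> F")
      case True
      have "norm (h x - \<phi> h) < \<epsilon>" using close True by blast
      then have "dist (\<phi> h) (h x) < E h" using epsle[OF True]
        by (simp add: dist_norm norm_minus_commute)
      then have "h x \<in> ball (\<phi> h) (E h)" by (simp only: mem_ball)
      then have "h x \<in> U h" using E True by blast
      then show ?thesis using hH by (simp add: iota_def)
    next
      case False
      then have "U h = UNIV" using hH by (simp add: F_def)
      then show ?thesis by simp
    qed
  next
    show "iota X r B x \<in> extensional (HX X r B)" by (simp add: iota_def)
  qed
  then have "iota X r B x \<in> T" using U(4) by blast
  then show ?thesis using ic x WT by blast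
qed

lemma agree:
  assumes g1: "continuous_map (betaB X r B) Y g1" and g2: "continuous_map (betaB X r B) Y g2"
    and H: "Hausdorff_space Y"
    and eq: "\<forall>x\<in>topspace X. g1 (iota X r B x) = g2 (iota X r B x)"
    and p: "p \<in> topspace (betaB X r B)"
  shows "g1 p = g2 p"
proof (rule ccontr)
  assume ne: "g1 p \<noteq> g2 p"
  have "g1 p \<in> topspace Y" "g2 p \<in> topspace Y" using cm_in[OF g1 p] cm_in[OF g2 p] .
  then obtain V1 V2 where V: "openin Y V1" "openin Y V2" "g1 p \<in> V1" "g2 p \<in> V2" "disjnt V1 V2"
    using H ne unfolding Hausdorff_space_def by metis
  define W where "W = {q \<in> topspace (betaB X r B). g1 q \<in> V1} \<inter> {q \<in> topspace (betaB X r B). g2 q \<in> V2}"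
  have W: "openin (betaB X r B) W" unfolding W_def
    by (intro openin_Int openin_continuous_map_preimage[OF g1 V(1)] openin_continuous_map_preimage[OF g2 V(2)])
  have pW: "p \<in> W" using p V by (simp add: W_def)
  have "p \<in> chars X r B" using p topspace_betaB by blast
  then obtain x where x: "x \<in> topspace X" and xW: "iota X r B x \<in> W" using density[OF _ W pW] by blast
  then have "g1 (iota X r B x) \<in> V1" "g2 (iota X r B x) \<in> V2" by (auto simp: W_def)
  then show False using eq x V(5) by (auto simp: disjnt_def)
qed



theorem lemma4p15:
  fixes X1 :: "'a topology" and X2 :: "'b topology"
    and B1 :: "'c topology" and B2 :: "'d topology"
    and f :: "'a \<Rightarrow> 'b" and r1 :: "'a \<Rightarrow> 'c" and r2 :: "'b \<Rightarrow> 'd" and f0 :: "'c \<Rightarrow> 'd"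
    and \<rho>1 :: "(('a \<Rightarrow> complex) \<Rightarrow> complex) \<Rightarrow> 'c"
    and \<rho>2 :: "(('b \<Rightarrow> complex) \<Rightarrow> complex) \<Rightarrow> 'd"
    and ft :: "(('a \<Rightarrow> complex) \<Rightarrow> complex) \<Rightarrow> (('b \<Rightarrow> complex) \<Rightarrow> complex)"
  assumes "continuous_map X1 X2 f" and "continuous_map X1 B1 r1"
    and "continuous_map X2 B2 r2" and "continuous_map B1 B2 f0"
    and "\<forall>x\<in>topspace X1. r2 (f x) = f0 (r1 x)"
    and "Hausdorff_space B1" and "locally_compact_space B1"
    and "Hausdorff_space B2" and "locally_compact_space B2"
    and "\<forall>K. compactin B2 K \<longrightarrow> compactin B1 {b \<in> topspace B1. f0 b \<in> K}"
    \<comment> \<open>rho1, rho2 are the maps beta_{B_j} r_j\<close>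
    and "continuous_map (betaB X1 r1 B1) B1 \<rho>1"
    and "\<forall>x\<in>topspace X1. \<rho>1 (iota X1 r1 B1 x) = r1 x"
    and "continuous_map (betaB X2 r2 B2) B2 \<rho>2"
    and "\<forall>x\<in>topspace X2. \<rho>2 (iota X2 r2 B2 x) = r2 x"
    \<comment> \<open>ft is the induced map tilde f\<close>
    and "continuous_map (betaB X1 r1 B1) (betaB X2 r2 B2) ft"
    and "\<forall>x\<in>topspace X1. ft (iota X1 r1 B1 x) = iota X2 r2 B2 (f x)"
    and "\<forall>p\<in>topspace (betaB X1 r1 B1). \<rho>2 (ft p) = f0 (\<rho>1 p)"
    and "homeomorphic_map X1 X2 f"
  shows "homeomorphic_map (betaB X1 r1 B1) (betaB X2 r2 B2) ft"
proof -
  note fc = assms(1) and r1c = assms(2) and f0c = assms(4) and comm = assms(5)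
    and H2 = assms(8) and L2 = assms(9) and pr = assms(10) and ftc = assms(15) and fti = assms(16)
  obtain fi where hm: "homeomorphic_maps X1 X2 f fi" using assms(18) homeomorphic_map_maps by blast
  have fic: "continuous_map X2 X1 fi" and fif: "\<forall>x\<in>topspace X1. fi (f x) = x"
    and ffi: "\<forall>y\<in>topspace X2. f (fi y) = y"
    using hm unfolding homeomorphic_maps_def by auto
  have comm2: "\<forall>z\<in>topspace X2. r2 z = f0 (r1 (fi z))"
  proof
    fix z assume z: "z \<in> topspace X2"
    have "fi z \<in> topspace X1" by (rule cm_in[OF fic z])
    then have "r2 (f (fi z)) = f0 (r1 (fi z))" using comm by blast
    then show "r2 z = f0 (r1 (fi z))" using ffi z by simp
  qed
  define Psi :: "('a \<Rightarrow> complex) \<Rightarrow> ('b \<Rightarrow> complex)" where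
    "Psi g = (\<lambda>z. if z \<in> topspace X2 then g (fi z) else 0)" for g
  define Phi :: "('b \<Rightarrow> complex) \<Rightarrow> ('a \<Rightarrow> complex)" where
    "Phi h = (\<lambda>y. if y \<in> topspace X1 then h (f y) else 0)" for h
  have PsiH: "Psi g \<in> HX X2 r2 B2" if "g \<in> HX X1 r1 B1" for g
    unfolding Psi_def by (rule transB[OF fic r1c f0c comm2 H2 L2 that])
  have PhiH: "Phi h \<in> HX X1 r1 B1" if "h \<in> HX X2 r2 B2" for h
    unfolding Phi_def by (rule transA[OF fc r1c f0c comm pr that])
  have PsiPhi: "Psi (Phi h) = h" if "h \<in> HX X2 r2 B2" for h
  proof
    fix z show "Psi (Phi h) z = h z"
    proof (cases "z \<in> topspace X2")
      case True
      then have "fi z \<in> topspace X1" by (rule cm_in[OF fic])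
      then show ?thesis using True ffi by (simp add: Psi_def Phi_def)
    qed (simp add: Psi_def HX_zero[OF that])
  qed
  have Psi_add: "Psi (\<lambda>x. g x + g' x) = (\<lambda>z. Psi g z + Psi g' z)" for g g'
    by (auto simp: Psi_def)
  have Psi_mult: "Psi (\<lambda>x. g x * g' x) = (\<lambda>z. Psi g z * Psi g' z)" for g g'
    by (auto simp: Psi_def)
  have Psi_scale: "Psi (\<lambda>x. c * g x) = (\<lambda>z. c * Psi g z)" for c g
    by (auto simp: Psi_def)
  define G :: "(('b \<Rightarrow> complex) \<Rightarrow> complex) \<Rightarrow> (('a \<Rightarrow> complex) \<Rightarrow> complex)" where "G \<psi> = restrict (\<lambda>g. \<psi> (Psi g)) (HX X1 r1 B1)" for \<psi>
  have Gch: "G \<psi> \<in> chars X1 r1 B1" if ps: "\<psi> \<in> chars X2 r2 B2" for \<psi>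
    unfolding chars_def mem_Collect_eq
  proof (intro conjI ballI allI)
    show "G \<psi> \<in> PiE (HX X1 r1 B1) (\<lambda>_. UNIV)" by (simp add: G_def)
    fix h g assume h: "h \<in> HX X1 r1 B1" and g: "g \<in> HX X1 r1 B1"
    show "G \<psi> (\<lambda>x. h x + g x) = G \<psi> h + G \<psi> g"
      using HX_add[OF h g] h g ch_D(1)[OF ps PsiH[OF h] PsiH[OF g]] by (simp add: G_def Psi_add)
    show "G \<psi> (\<lambda>x. h x * g x) = G \<psi> h * G \<psi> g"
      using HX_mult[OF h g] h g ch_D(2)[OF ps PsiH[OF h] PsiH[OF g]] by (simp add: G_def Psi_mult)
  next
    fix c h assume h: "h \<in> HX X1 r1 B1"
    show "G \<psi> (\<lambda>x. c * h x) = c * G \<psi> h"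
      using HX_scale[OF h] h ch_D(3)[OF ps PsiH[OF h]] by (simp add: G_def Psi_scale)
  next
    obtain h where h: "h \<in> HX X2 r2 B2" "\<psi> h \<noteq> 0" using ch_D(4)[OF ps] by blast
    have "G \<psi> (Phi h) = \<psi> h" using PhiH[OF h(1)] PsiPhi[OF h(1)] by (simp add: G_def)
    then show "\<exists>h\<in>HX X1 r1 B1. G \<psi> h \<noteq> 0" using PhiH[OF h(1)] h(2) by metis
  qed
  have Gc: "continuous_map (betaB X2 r2 B2) (betaB X1 r1 B1) G"
    unfolding betaB_def continuous_map_in_subtopology
  proof
    show "continuous_map (subtopology (product_topology (\<lambda>_. euclidean) (HX X2 r2 B2)) (chars X2 r2 B2))
        (product_topology (\<lambda>_. euclidean) (HX X1 r1 B1)) G"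
      unfolding continuous_map_componentwise
    proof
      show "G ` topspace (subtopology (product_topology (\<lambda>_. euclidean) (HX X2 r2 B2)) (chars X2 r2 B2)) \<subseteq> extensional (HX X1 r1 B1)"
        by (auto simp: G_def)
      show "\<forall>k\<in>HX X1 r1 B1. continuous_map (subtopology (product_topology (\<lambda>_. euclidean) (HX X2 r2 B2)) (chars X2 r2 B2)) euclidean (\<lambda>x. G x k)"
      proof
        fix k assume k: "k \<in> HX X1 r1 B1"
        have "continuous_map (product_topology (\<lambda>_. euclidean) (HX X2 r2 B2)) euclidean (\<lambda>x. x (Psi k))"
          by (rule continuous_map_product_projection[OF PsiH[OF k]])
        then have "continuous_map (subtopology (product_topology (\<lambda>_. euclidean) (HX X2 r2 B2)) (chars X2 r2 B2)) euclidean (\<lambda>x. x (Psi k))"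
          by (rule continuous_map_from_subtopology)
        then show "continuous_map (subtopology (product_topology (\<lambda>_. euclidean) (HX X2 r2 B2)) (chars X2 r2 B2)) euclidean (\<lambda>x. G x k)"
          using k by (simp add: G_def)
      qed
    qed
    show "G \<in> topspace (subtopology (product_topology (\<lambda>_. euclidean) (HX X2 r2 B2)) (chars X2 r2 B2)) \<rightarrow> chars X1 r1 B1"
      using Gch by (auto simp: topspace_subtopology)
  qed
  have Giota: "G (iota X2 r2 B2 y) = iota X1 r1 B1 (fi y)" if y: "y \<in> topspace X2" for y
    unfolding G_def iota_def
  proof (rule restrict_ext)
    fix g assume g: "g \<in> HX X1 r1 B1"
    show "restrict (\<lambda>h. h y) (HX X2 r2 B2) (Psi g) = g (fi y)"
      using PsiH[OF g] y by (simp add: Psi_def)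
  qed
  have e1: "\<forall>p\<in>topspace (betaB X1 r1 B1). G (ft p) = p"
  proof
    fix p assume p: "p \<in> topspace (betaB X1 r1 B1)"
    have "(G \<circ> ft) p = id p"
    proof (rule agree[OF continuous_map_compose[OF ftc Gc] continuous_map_id Hausdorff_betaB _ p])
      show "\<forall>x\<in>topspace X1. (G \<circ> ft) (iota X1 r1 B1 x) = id (iota X1 r1 B1 x)"
      proof
        fix x assume x: "x \<in> topspace X1"
        have "f x \<in> topspace X2" by (rule cm_in[OF fc x])
        then show "(G \<circ> ft) (iota X1 r1 B1 x) = id (iota X1 r1 B1 x)"
          using fti x Giota fif by simp
      qed
    qed
    then show "G (ft p) = p" by simp
  qed
  have e2: "\<forall>q\<in>topspace (betaB X2 r2 B2). ft (G q) = q"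
  proof
    fix q assume q: "q \<in> topspace (betaB X2 r2 B2)"
    have "(ft \<circ> G) q = id q"
    proof (rule agree[OF continuous_map_compose[OF Gc ftc] continuous_map_id Hausdorff_betaB _ q])
      show "\<forall>y\<in>topspace X2. (ft \<circ> G) (iota X2 r2 B2 y) = id (iota X2 r2 B2 y)"
      proof
        fix y assume y: "y \<in> topspace X2"
        have "fi y \<in> topspace X1" by (rule cm_in[OF fic y])
        then show "(ft \<circ> G) (iota X2 r2 B2 y) = id (iota X2 r2 B2 y)"
          using fti y Giota ffi by simp
      qed
    qed
    then show "ft (G q) = q" by simp
  qed
  have "homeomorphic_maps (betaB X1 r1 B1) (betaB X2 r2 B2) ft G"
    unfolding homeomorphic_maps_def using ftc Gc e1 e2 by blast
  then show ?thesis using homeomorphic_map_maps by blast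
qed


end
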